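(* In the setting below, assume $Z^j\epsilon_{\bullet,j}\neq0$ for all $j$. If for some constant $c>1$ the penalty level satisfies $$\lambda\ge\frac{c+1}{c-1}\max_{i\in[n]}\Big(\sum_{j\in[p]}\frac{(Z^j_{i,\bullet}\epsilon_{\bullet,j})^2}{\|Z^j\epsilon_{\bullet,j}\|_2^2}\Big)^{1/2},$$ then $\|\widehat\Delta_{O^c,\bullet}\|_{2,1}\le c\,\|\widehat\Delta_{O,\bullet}\|_{2,1}$.
   Context: Setting. Let $n,p\ge 1$, $[n]=\{1,\dots,n\}$. $X=Y+E^*\in\mathbb R^{n\times p}$ where (C1) the rows of $Y$ are independent $\mathcal N_p(\mu^*,\Sigma^* )$, $\Sigma^*$ positive definite; (C2) $E^*$ deterministic, $[n]=I\cup O$ a partition with the rows of $E^*$ indexed by $I$ equal to zero, and every row of $E^*(\Sigma^* )^{-1/2}$ of Euclidean norm at most $M_E\sqrt p$; $\mu^*=0$. $\Omega^*=(\Sigma^* )^{-1}$ with diagonal entries $\omega^*_{jj}$, $B^*=\Omega^*\mathrm{diag}(\Omega^* )^{-1}$, $X^{(n)}=X/\sqrt n$, $\Theta^*=E^*B^*/\sqrt n$, $\xi=X^{(n)}B^*-\Theta^*$, $\epsilon_{ij}=\sqrt n(\omega^*_{jj})^{1/2}\xi_{ij}$ (each column $\epsilon_{\bullet,j}$ is $\mathcal N_n(0,I_n)$ and independent of $X_{\bullet,j^c}$). Notation: $A_{i,\bullet}$, $A_{\bullet,j}$ rows/columns, $A_{K,\bullet}$ rows indexed by $K$, $j^c=[p]\setminus\{j\}$,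 $O^c=I$, $\|A\|_{q_1,q_2}=(\sum_i\|A_{i,\bullet}\|_{q_1}^{q_2})^{1/q_2}$. $Z^j$ is the orthogonal projector in $\mathbb R^n$ onto the orthogonal complement of the span of the columns of $X_{\bullet,j^c}$. Estimator: $\widehat\Theta$ minimizes over $\Theta\in\mathbb R^{n\times p}$ the function $\sum_{j=1}^p\|Z^j(X^{(n)}_{\bullet,j}-\Theta_{\bullet,j})\|_2+\lambda\|\Theta\|_{2,1}$, and $\widehat\Delta=\widehat\Theta-\Theta^*$. *)

theory Defs
  imports "HOL-Analysis.Analysis"
begin

definition perp_proj :: "('a::euclidean_space) set \<Rightarrow> 'a \<Rightarrow> 'a" where
  "perp_proj S v = (THE w. w \<in> orthogonal_comp (span S) \<and> v - w \<in> span S)"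

definition Zproj :: "real^'p^'n \<Rightarrow> 'p \<Rightarrow> real^'n \<Rightarrow> real^'n" where
  "Zproj X j = perp_proj {column k X | k. k \<noteq> j}"

definition norm21 :: "'n set \<Rightarrow> real^'p^'n \<Rightarrow> real" where
  "norm21 K A = (\<Sum>i\<in>K. norm (A $ i))"

definition objective :: "real \<Rightarrow> real^'p^'n \<Rightarrow> real^'p^'n \<Rightarrow> real" where
  "objective lam X Th =
     (\<Sum>j\<in>UNIV. norm (Zproj X j (column j ((1 / sqrt (real CARD('n))) *\<^sub>R X) - column j Th)))
     + lam * norm21 UNIV Th"

definition pos_def :: "real^'p^'p \<Rightarrow> bool" where
  "pos_def A \<longleftrightarrow> transpose A = A \<and> (\<forall>x. x \<noteq> 0 \<longrightarrow> x \<bullet> (A *v x) > 0)"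

end

theory Submission
  imports Defs
begin


lemma perp_proj_exists:
  fixes S :: "'a::euclidean_space set"
  shows "perp_proj S v \<in> orthogonal_comp (span S) \<and> v - perp_proj S v \<in> span S"
proof -
  obtain y z where y: "y \<in> span S" and z: "\<And>w. w \<in> span S \<Longrightarrow> orthogonal z w" and v: "v = y + z"
    by (rule orthogonal_subspace_decomp_exists[of S v]) blast
  have zc: "z \<in> orthogonal_comp (span S)"
    using z by (auto simp: orthogonal_comp_def orthogonal_commute)
  have uniq: "w = z" if "w \<in> orthogonal_comp (span S)" "v - w \<in> span S" for w
  proof -
    have "(v - w) - y \<in> span S" using that(2) y span_diff by blast
    hence "z - w \<in> span S" using v by (simp add: algebra_simps)
    moreover have "z - w \<in> orthogonal_comp (span S)"
      using zc that(1) subspace_orthogonal_comp by (metis subspace_diff)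
    ultimately have "orthogonal (z - w) (z - w)"
      by (auto simp: orthogonal_comp_def)
    thus ?thesis by (simp add: orthogonal_def)
  qed
  have "\<exists>!w. w \<in> orthogonal_comp (span S) \<and> v - w \<in> span S"
    using zc y v uniq by (intro ex1I[of _ z]) auto
  thus ?thesis unfolding perp_proj_def by (rule theI')
qed

lemma perp_proj_unique:
  fixes S :: "'a::euclidean_space set"
  assumes "w \<in> orthogonal_comp (span S)" "v - w \<in> span S"
  shows "perp_proj S v = w"
proof -
  have p: "perp_proj S v \<in> orthogonal_comp (span S)" "v - perp_proj S v \<in> span S"
    using perp_proj_exists by blast+
  have "(v - w) - (v - perp_proj S v) \<in> span S" using p(2) assms(2) span_diff by blast
  hence "perp_proj S v - w \<in> span S" by (simp add: algebra_simps)
  moreover have "perp_proj S v - w \<in> orthogonal_comp (span S)"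
    using p(1) assms(1) subspace_orthogonal_comp by (metis subspace_diff)
  ultimately have "orthogonal (perp_proj S v - w) (perp_proj S v - w)"
    by (auto simp: orthogonal_comp_def)
  thus ?thesis by (simp add: orthogonal_def)
qed

lemma perp_proj_linear:
  fixes S :: "'a::euclidean_space set"
  shows "linear (perp_proj S)"
proof (rule linearI)
  fix a b
  have A: "perp_proj S a \<in> orthogonal_comp (span S)" "a - perp_proj S a \<in> span S"
    and B: "perp_proj S b \<in> orthogonal_comp (span S)" "b - perp_proj S b \<in> span S"
    using perp_proj_exists by blast+
  have "perp_proj S a + perp_proj S b \<in> orthogonal_comp (span S)"
    using A(1) B(1) subspace_orthogonal_comp subspace_add by blast
  moreover have "(a + b) - (perp_proj S a + perp_proj S b) = (a - perp_proj S a) + (b - perp_proj S b)"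
    by (simp add: algebra_simps)
  hence "(a + b) - (perp_proj S a + perp_proj S b) \<in> span S"
    using A(2) B(2) span_add by metis
  ultimately show "perp_proj S (a + b) = perp_proj S a + perp_proj S b"
    by (rule perp_proj_unique)
next
  fix r and a :: 'a
  have A: "perp_proj S a \<in> orthogonal_comp (span S)" "a - perp_proj S a \<in> span S"
    using perp_proj_exists by blast+
  have "r *\<^sub>R perp_proj S a \<in> orthogonal_comp (span S)"
    using A(1) subspace_orthogonal_comp subspace_scale by blast
  moreover have "r *\<^sub>R a - r *\<^sub>R perp_proj S a = r *\<^sub>R (a - perp_proj S a)"
    by (simp add: algebra_simps)
  hence "r *\<^sub>R a - r *\<^sub>R perp_proj S a \<in> span S"
    using A(2) span_scale by metis
  ultimately show "perp_proj S (r *\<^sub>R a) = r *\<^sub>R perp_proj S a"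
    by (rule perp_proj_unique)
qed

lemma perp_proj_span:
  fixes S :: "'a::euclidean_space set"
  assumes "x \<in> span S" shows "perp_proj S x = 0"
  by (rule perp_proj_unique) (auto simp: assms orthogonal_comp_def orthogonal_def)

lemma perp_proj_inner:
  fixes S :: "'a::euclidean_space set"
  assumes "u \<in> orthogonal_comp (span S)"
  shows "u \<bullet> perp_proj S d = u \<bullet> d"
proof -
  have "d - perp_proj S d \<in> span S" using perp_proj_exists by blast
  hence "u \<bullet> (d - perp_proj S d) = 0" using assms
    by (auto simp: orthogonal_comp_def orthogonal_def inner_commute)
  thus ?thesis by (simp add: inner_diff_right)
qed



lemma final_arith:
  fixes DI DO m lam c :: real
  assumes "m > 0" "c > 1" "lam \<ge> (c+1)/(c-1)*m" "DI \<ge> 0" "DO \<ge> 0"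
    "lam*(DI-DO) \<le> m*(DI+DO)"
  shows "DI \<le> c*DO"
proof (rule ccontr)
  assume "\<not> DI \<le> c*DO"
  hence h: "DI > c*DO" by simp
  hence "DI \<ge> DO" using assms by (smt (verit) mult_le_cancel_right1)
  have l: "(c-1)*lam \<ge> (c+1)*m" using assms(2,3) by (simp add: field_simps)
  have "(c+1)*m*(DI-DO) \<le> (c-1)*lam*(DI-DO)"
    using l \<open>DI \<ge> DO\<close> by (simp add: mult_right_mono)
  also have "\<dots> \<le> (c-1)*(m*(DI+DO))" using assms(2,6) by (simp add: mult.assoc)
  finally have "m*(2*DI - 2*c*DO) \<le> 0" by (simp add: algebra_simps)
  hence "2*DI - 2*c*DO \<le> 0" using assms(1) by (simp add: mult_le_0_iff)
  thus False using h by simp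
qed

lemma column_mult_sum:
  fixes A :: "real^'k^'n" and B :: "real^'p^'k"
  shows "column j (A ** B) = (\<Sum>k\<in>UNIV. (B$k$j) *\<^sub>R column k A)"
  by (simp add: vec_eq_iff column_def matrix_matrix_mult_def mult.commute)

lemma norm_vec_sqrt:
  fixes w :: "real^'p"
  shows "norm w = sqrt (\<Sum>j\<in>UNIV. (w$j)^2)"
  by (simp add: norm_vec_def L2_set_def)

theorem mainTheorem4:
  fixes X E :: "real^'p^'n" and Sigma S :: "real^'p^'p" and Out :: "'n set"
    and M_E lam c :: real
    and Omega B :: "real^'p^'p" and ThetaStar Xi Eps ThetaHat :: "real^'p^'n"
  assumes Sigma_pd: "pos_def Sigma"
    and E_I: "\<forall>i\<in>-Out. E $ i = 0"
    and S_sqrt: "pos_def S" "S ** S = matrix_inv Sigma"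
    and E_bound: "\<forall>i. norm ((E ** S) $ i) \<le> M_E * sqrt (real CARD('p))"
    and Omega_def: "Omega = matrix_inv Sigma"
    and B_def: "B = (\<chi> k j. Omega $ k $ j / Omega $ j $ j)"
    and ThetaStar_def: "ThetaStar = (1 / sqrt (real CARD('n))) *\<^sub>R (E ** B)"
    and Xi_def: "Xi = ((1 / sqrt (real CARD('n))) *\<^sub>R X) ** B - ThetaStar"
    and Eps_def: "Eps = (\<chi> i j. sqrt (real CARD('n)) * sqrt (Omega $ j $ j) * Xi $ i $ j)"
    and ThetaHat_min: "\<forall>Th. objective lam X ThetaHat \<le> objective lam X Th"
    and Z_nonzero: "\<forall>j. Zproj X j (column j Eps) \<noteq> 0"
    and c_gt: "c > 1"
    and lam_ge: "lam \<ge> (c + 1) / (c - 1) *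
        Max (range (\<lambda>i. sqrt (\<Sum>j\<in>UNIV.
            (Zproj X j (column j Eps) $ i)\<^sup>2 / (norm (Zproj X j (column j Eps)))\<^sup>2)))"
  shows "norm21 (-Out) (ThetaHat - ThetaStar) \<le> c * norm21 Out (ThetaHat - ThetaStar)"
proof -
  define sn where "sn = 1 / sqrt (real CARD('n))"
  define Xn where "Xn = sn *\<^sub>R X"
  define Z where "Z = Zproj X"
  define u where "u = (\<lambda>j. Z j (column j Xi))"
  define a where "a = (\<lambda>j::'p. sqrt (real CARD('n)) * sqrt (Omega $ j $ j))"
  define Dl where "Dl = ThetaHat - ThetaStar"
  have lin: "linear (Z j)" for j unfolding Z_def Zproj_def by (rule perp_proj_linear)
  have colEps: "column j Eps = a j *\<^sub>R column j Xi" for j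
    by (simp add: Eps_def a_def vec_eq_iff column_def)
  have ZEps: "Z j (column j Eps) = a j *\<^sub>R u j" for j
    using colEps lin[of j] by (simp add: u_def linear_cmul)
  have ZE0: "Z j (column j Eps) \<noteq> 0" for j using Z_nonzero Z_def by simp
  have a0: "a j \<noteq> 0" and u0: "u j \<noteq> 0" for j using ZE0[of j] ZEps[of j] by auto
  have Om0: "Omega $ j $ j \<noteq> 0" for j using a0[of j] by (auto simp: a_def)
  have uorth: "u j \<in> orthogonal_comp (span {column k X | k. k \<noteq> j})" for j
    unfolding u_def Z_def Zproj_def using perp_proj_exists by blast
  have decomp: "Z j (column j ((1 / sqrt (real CARD('n))) *\<^sub>R X) - column j Th)
      = u j - Z j (column j Th - column j ThetaStar)" for j Th
  proof -
    define r where "r = (\<Sum>k\<in>UNIV-{j}. (B$k$j) *\<^sub>R column k Xn)"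
    have colXn: "column k Xn = sn *\<^sub>R column k X" for k
      by (simp add: Xn_def vec_eq_iff column_def)
    have rspan: "r \<in> span {column k X | k. k \<noteq> j}"
      unfolding r_def
    proof (rule span_sum)
      fix k assume "k \<in> UNIV - {j}"
      hence "column k X \<in> span {column k X | k. k \<noteq> j}" by (auto intro: span_base)
      thus "(B$k$j) *\<^sub>R column k Xn \<in> span {column k X | k. k \<noteq> j}"
        by (simp add: colXn span_scale)
    qed
    have Zr: "Z j r = 0" unfolding Z_def Zproj_def using rspan by (rule perp_proj_span)
    have Bjj: "B$j$j = 1" using Om0[of j] by (simp add: B_def)
    have "column j (Xn ** B) = (\<Sum>k\<in>UNIV. (B$k$j) *\<^sub>R column k Xn)"
      by (rule column_mult_sum)
    also have "\<dots> = (B$j$j) *\<^sub>R column j Xn + r"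
      unfolding r_def by (simp add: sum.remove[of UNIV j])
    finally have cB: "column j (Xn ** B) = column j Xn + r" using Bjj by simp
    have cXi: "column j Xi = column j (Xn ** B) - column j ThetaStar"
      by (simp add: Xi_def Xn_def sn_def vec_eq_iff column_def)
    have eq: "column j ((1 / sqrt (real CARD('n))) *\<^sub>R X) - column j Th
       = column j Xi - r - (column j Th - column j ThetaStar)"
      using cXi cB by (simp add: Xn_def sn_def algebra_simps)
    show ?thesis unfolding eq using lin[of j] Zr
      by (simp add: linear_diff u_def)
  qed
  have lb: "norm (u j - Z j d) \<ge> norm (u j) - (u j \<bullet> d) / norm (u j)" for j d
  proof -
    have i1: "u j \<bullet> Z j d = u j \<bullet> d" unfolding Z_def Zproj_def
      using uorth[of j] by (rule perp_proj_inner)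
    have "u j \<bullet> (u j - Z j d) \<le> norm (u j) * norm (u j - Z j d)"
      by (rule norm_cauchy_schwarz)
    hence "norm (u j)^2 - u j \<bullet> d \<le> norm (u j) * norm (u j - Z j d)"
      using i1 by (simp add: inner_diff_right power2_norm_eq_inner)
    moreover have "norm (u j) > 0" using u0 by simp
    ultimately show ?thesis by (simp add: field_simps power2_eq_square)
  qed
  have optim: "objective lam X ThetaHat \<le> objective lam X ThetaStar" using ThetaHat_min by blast
  have objHat: "objective lam X ThetaHat = (\<Sum>j\<in>UNIV. norm (u j - Z j (column j Dl))) + lam * norm21 UNIV ThetaHat"
  proof -
    have "column j ThetaHat - column j ThetaStar = column j Dl" for j
      by (simp add: Dl_def column_def vec_eq_iff)
    thus ?thesis unfolding objective_def Z_def[symmetric] decomp by simp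
  qed
  have objStar: "objective lam X ThetaStar = (\<Sum>j\<in>UNIV. norm (u j)) + lam * norm21 UNIV ThetaStar"
    unfolding objective_def Z_def[symmetric] decomp
    using lin by (simp add: linear_0)
  have sumlb: "(\<Sum>j\<in>UNIV. norm (u j - Z j (column j Dl))) \<ge> (\<Sum>j\<in>UNIV. norm (u j)) - (\<Sum>j\<in>UNIV. (u j \<bullet> column j Dl) / norm (u j))"
    using sum_mono[of UNIV "\<lambda>j. norm (u j) - (u j \<bullet> column j Dl) / norm (u j)" "\<lambda>j. norm (u j - Z j (column j Dl))"] lb
    by (simp add: sum_subtractf)
  have key1: "lam * (norm21 UNIV ThetaHat - norm21 UNIV ThetaStar) \<le> (\<Sum>j\<in>UNIV. (u j \<bullet> column j Dl) / norm (u j))"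
    using optim objHat objStar sumlb by (simp add: algebra_simps)
  define g where "g = (\<lambda>i. sqrt (\<Sum>j\<in>UNIV. (Zproj X j (column j Eps) $ i)\<^sup>2 / (norm (Zproj X j (column j Eps)))\<^sup>2))"
  define m where "m = Max (range g)"
  define wv where "wv = (\<lambda>i. \<chi> j. u j $ i / norm (u j))"
  have wvn: "norm (wv i) = g i" for i
  proof -
    have "(Zproj X j (column j Eps) $ i)\<^sup>2 / (norm (Zproj X j (column j Eps)))\<^sup>2 = (wv i $ j)^2" for j
      using ZEps[of j] a0[of j] by (simp add: Z_def wv_def power_divide power_mult_distrib)
    thus ?thesis by (simp add: g_def norm_vec_sqrt)
  qed
  have gm: "g i \<le> m" for i unfolding m_def by (rule Max_ge) auto
  have swap: "(\<Sum>j\<in>UNIV. (u j \<bullet> column j Dl) / norm (u j)) = (\<Sum>i\<in>UNIV. wv i \<bullet> Dl $ i)"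
  proof -
    have "(\<Sum>j\<in>UNIV. (u j \<bullet> column j Dl) / norm (u j)) = (\<Sum>j\<in>UNIV. \<Sum>i\<in>UNIV. u j $ i * Dl $ i $ j / norm (u j))"
      by (simp add: inner_vec_def column_def sum_divide_distrib)
    also have "\<dots> = (\<Sum>i\<in>UNIV. \<Sum>j\<in>UNIV. u j $ i * Dl $ i $ j / norm (u j))"
      by (rule sum.swap)
    also have "\<dots> = (\<Sum>i\<in>UNIV. wv i \<bullet> Dl $ i)"
      by (simp add: inner_vec_def wv_def)
    finally show ?thesis .
  qed
  have key2: "(\<Sum>i\<in>UNIV. wv i \<bullet> Dl $ i) \<le> m * norm21 UNIV Dl"
  proof -
    have "wv i \<bullet> Dl $ i \<le> m * norm (Dl $ i)" for i
    proof -
      have "wv i \<bullet> Dl $ i \<le> norm (wv i) * norm (Dl $ i)" by (rule norm_cauchy_schwarz)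
      also have "\<dots> \<le> m * norm (Dl $ i)" using wvn gm by (simp add: mult_right_mono)
      finally show ?thesis .
    qed
    hence "(\<Sum>i\<in>UNIV. wv i \<bullet> Dl $ i) \<le> (\<Sum>i\<in>UNIV. m * norm (Dl $ i))" by (rule sum_mono)
    thus ?thesis by (simp add: norm21_def sum_distrib_left)
  qed
  have mpos: "m > 0"
  proof -
    obtain j :: 'p where True by simp
    from u0[of j] obtain i where ui: "u j $ i \<noteq> 0" by (auto simp: vec_eq_iff)
    have "wv i $ j \<noteq> 0" using ui u0[of j] by (simp add: wv_def)
    hence "wv i \<noteq> 0" by auto
    hence "g i > 0" using wvn[of i] by (metis zero_less_norm_iff)
    thus ?thesis using gm[of i] by simp
  qed
  have TS0: "ThetaStar $ i = 0" if "i \<notin> Out" for i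
    using E_I that by (simp add: ThetaStar_def vec_eq_iff matrix_matrix_mult_def)
  have split: "norm21 UNIV A = norm21 Out A + norm21 (-Out) A" for A :: "real^'p^'n"
    unfolding norm21_def using sum.union_disjoint[of Out "-Out" "\<lambda>i. norm (A $ i)"]
    by (simp add: Un_commute)
  have hatI: "norm21 (-Out) ThetaHat = norm21 (-Out) Dl"
    unfolding norm21_def by (rule sum.cong) (auto simp: Dl_def TS0)
  have starI: "norm21 (-Out) ThetaStar = 0"
    unfolding norm21_def by (auto simp: TS0)
  have hatO: "norm21 Out ThetaHat \<ge> norm21 Out ThetaStar - norm21 Out Dl"
  proof -
    have "norm (ThetaHat $ i) \<ge> norm (ThetaStar $ i) - norm (Dl $ i)" for i
      using norm_triangle_ineq2[of "ThetaStar $ i" "ThetaHat $ i"]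
      by (simp add: Dl_def norm_minus_commute)
    hence "(\<Sum>i\<in>Out. norm (ThetaStar $ i) - norm (Dl $ i)) \<le> (\<Sum>i\<in>Out. norm (ThetaHat $ i))"
      by (intro sum_mono)
    thus ?thesis by (simp add: norm21_def sum_subtractf)
  qed
  have diff: "norm21 UNIV ThetaHat - norm21 UNIV ThetaStar \<ge> norm21 (-Out) Dl - norm21 Out Dl"
    using split[of ThetaHat] split[of ThetaStar] hatI starI hatO by simp
  have lam_nn: "lam \<ge> 0"
  proof -
    have "(c+1)/(c-1) * m \<ge> 0" using c_gt mpos by simp
    thus ?thesis using lam_ge by (simp add: g_def m_def)
  qed
  have ineq: "lam * (norm21 (-Out) Dl - norm21 Out Dl) \<le> m * (norm21 (-Out) Dl + norm21 Out Dl)"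
  proof -
    have "lam * (norm21 (-Out) Dl - norm21 Out Dl) \<le> lam * (norm21 UNIV ThetaHat - norm21 UNIV ThetaStar)"
      using diff lam_nn by (simp add: mult_left_mono)
    also have "\<dots> \<le> m * norm21 UNIV Dl" using key1 swap key2 by simp
    also have "\<dots> = m * (norm21 (-Out) Dl + norm21 Out Dl)" using split[of Dl] by simp
    finally show ?thesis .
  qed
  have nn: "norm21 K Dl \<ge> 0" for K unfolding norm21_def by (simp add: sum_nonneg)
  have lamm: "lam \<ge> (c+1)/(c-1)*m" using lam_ge by (simp add: g_def m_def)
  show ?thesis unfolding Dl_def[symmetric]
    by (rule final_arith[OF mpos c_gt lamm nn nn ineq])
qed

end
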